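(* Let $n\in\mathbb N$. For any $K\in\mathcal S_n\setminus\{\emptyset,\mathbb R^n\}$ we have \[ 2\le\mathrm{diam}(K)+\mathrm{diam}(K^c)\le 2\sqrt2. \] Moreover, if $\mathrm{diam}(K)=d$ then $2-d\le\mathrm{diam}(K^c)\le\sqrt{4-d^2}$.
   Context: $B(x,r)$ is the closed Euclidean ball. For $A\subseteq\mathbb R^n$, $A^c=\bigcap_{x\in A}B(x,1)$. $\mathcal S_n$ is the class of all sets of the form $\bigcap_{x\in A}B(x,1)$, $A\subseteq\mathbb R^n$ (including $\emptyset$ and $\mathbb R^n$). $\mathrm{diam}(A)=\sup\{\|x-y\|_2:x,y\in A\}$. *)

theory Defs
  imports "HOL-Analysis.Analysis"
begin

text \<open>The ball-convex dual: A^c = intersection of closed unit balls centred at points of A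
  (equal to UNIV when A is empty).\<close>
definition ball_dual :: "'a::euclidean_space set \<Rightarrow> 'a set" where
  "ball_dual A = (\<Inter>x\<in>A. cball x 1)"

definition S_class :: "'a::euclidean_space set set" where
  "S_class = range ball_dual"

end

theory Submission
  imports Defs
begin

lemma mem_bd: "x \<in> ball_dual A \<longleftrightarrow> (\<forall>a\<in>A. dist a x \<le> 1)"
  unfolding ball_dual_def by auto

lemma bd_sub: "A \<subseteq> ball_dual (ball_dual A)"
  by (auto simp: mem_bd) (metis dist_commute)

lemma bd_mono: "A \<subseteq> B \<Longrightarrow> ball_dual B \<subseteq> ball_dual A"
  unfolding ball_dual_def by auto

lemma bd3: "ball_dual (ball_dual (ball_dual A)) = ball_dual A"
  by (meson bd_mono bd_sub subset_antisym)

lemma bd_bounded: "a \<in> A \<Longrightarrow> bounded (ball_dual A)"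
  unfolding bounded_def by (intro exI[of _ a] exI[of _ 1]) (auto simp: mem_bd)

lemma key1:
  fixes P Q :: "'a::euclidean_space set"
  assumes PQ: "P = ball_dual Q" and Qne: "Q \<noteq> {}" and Pne: "P \<noteq> {}"
    and bQ: "bounded Q" and bP: "bounded P" and dQ1: "diameter Q < 1"
  shows "2 \<le> diameter P + diameter Q"
proof (rule ccontr)
  assume "\<not> 2 \<le> diameter P + diameter Q"
  hence lt: "diameter P + diameter Q < 2" by simp
  define \<rho> where "\<rho> = diameter P + diameter Q - 1"
  have rho1: "\<rho> < 1" using lt by (simp add: \<rho>_def)
  have ballin: "z \<in> P" if y: "y \<in> Q" and dz: "dist y z \<le> 1 - diameter Q" for y z
  proof -
    have "\<forall>w\<in>Q. dist w z \<le> 1"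
    proof
      fix w assume w: "w \<in> Q"
      have "dist w z \<le> dist w y + dist y z" by (rule dist_triangle)
      also have "dist w y \<le> diameter Q" using diameter_bounded_bound[OF bQ w y] .
      finally show "dist w z \<le> 1" using dz by simp
    qed
    thus ?thesis using PQ by (simp add: mem_bd)
  qed
  obtain b :: 'a where b: "norm b = 1"
    using nonempty_Basis norm_Basis by blast
  have cross: "dist x y \<le> \<rho>" if x: "x \<in> P" and y: "y \<in> Q" for x y
  proof -
    define u where "u = (if x = y then b else (x - y) /\<^sub>R norm (x - y))"
    have nu: "norm u = 1" using b by (auto simp: u_def)
    have xy: "x - y = norm (x - y) *\<^sub>R u" by (auto simp: u_def)
    define z where "z = y - (1 - diameter Q) *\<^sub>R u"
    have dQ0: "0 \<le> diameter Q" using diameter_ge_0[OF bQ] .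
    have "dist y z = 1 - diameter Q" using nu dQ1 by (simp add: z_def dist_norm)
    hence "z \<in> P" using ballin[OF y] by simp
    hence "dist x z \<le> diameter P" using diameter_bounded_bound[OF bP x] by blast
    moreover have "x - z = (norm (x - y) + (1 - diameter Q)) *\<^sub>R u"
      using xy by (simp add: z_def algebra_simps)
    hence "dist x z = norm (x - y) + (1 - diameter Q)"
      using dQ1 nu by (simp add: dist_norm)
    ultimately show ?thesis by (simp add: \<rho>_def dist_norm)
  qed
  have step: "x + (1 - \<rho>) *\<^sub>R b \<in> P" if x: "x \<in> P" for x
  proof -
    have "\<forall>w\<in>Q. dist w (x + (1 - \<rho>) *\<^sub>R b) \<le> 1"
    proof
      fix w assume w: "w \<in> Q"
      have "dist w (x + (1 - \<rho>) *\<^sub>R b) \<le> dist w x + dist x (x + (1 - \<rho>) *\<^sub>R b)"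
        by (rule dist_triangle)
      also have "dist x (x + (1 - \<rho>) *\<^sub>R b) = 1 - \<rho>" using b rho1 by (simp add: dist_norm)
      also have "dist w x \<le> \<rho>" using cross[OF x w] by (simp add: dist_commute)
      finally show "dist w (x + (1 - \<rho>) *\<^sub>R b) \<le> 1" by simp
    qed
    thus ?thesis using PQ by (simp add: mem_bd)
  qed
  obtain x0 where x0: "x0 \<in> P" using Pne by blast
  have iter: "x0 + (real k * (1 - \<rho>)) *\<^sub>R b \<in> P" for k
  proof (induction k)
    case 0 then show ?case using x0 by simp
  next
    case (Suc k)
    from step[OF Suc] show ?case by (simp add: algebra_simps distrib_left)
  qed
  obtain k where k: "diameter P < real k * (1 - \<rho>)"
    using ex_less_of_nat_mult[of "1 - \<rho>" "diameter P"] rho1 by auto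
  have "dist x0 (x0 + (real k * (1 - \<rho>)) *\<^sub>R b) \<le> diameter P"
    using diameter_bounded_bound[OF bP x0 iter] .
  moreover have "dist x0 (x0 + (real k * (1 - \<rho>)) *\<^sub>R b) = real k * (1 - \<rho>)"
    using b rho1 by (simp add: dist_norm)
  ultimately show False using k by simp
qed

lemma quad:
  fixes x y u v :: "'a::euclidean_space"
  assumes "dist x u \<le> 1" "dist x v \<le> 1" "dist y u \<le> 1" "dist y v \<le> 1"
  shows "(dist x y)\<^sup>2 + (dist u v)\<^sup>2 \<le> 4"
proof -
  have id: "(dist x u)\<^sup>2 + (dist x v)\<^sup>2 + (dist y u)\<^sup>2 + (dist y v)\<^sup>2
      = (dist x y)\<^sup>2 + (dist u v)\<^sup>2 + (norm (x + y - u - v))\<^sup>2"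
    unfolding dist_norm power2_norm_eq_inner
    by (simp add: inner_diff_left inner_diff_right inner_add_left inner_add_right inner_commute)
  have "(dist x u)\<^sup>2 \<le> 1" "(dist x v)\<^sup>2 \<le> 1" "(dist y u)\<^sup>2 \<le> 1" "(dist y v)\<^sup>2 \<le> 1"
    using assms by (simp_all add: power_le_one)
  thus ?thesis using id by (smt (verit) zero_le_power2)
qed

lemma key2:
  fixes P Q :: "'a::euclidean_space set"
  assumes Pne: "P \<noteq> {}" and Qne: "Q \<noteq> {}" and bP: "bounded P" and bQ: "bounded Q"
    and cr: "\<And>x u. x \<in> P \<Longrightarrow> u \<in> Q \<Longrightarrow> dist x u \<le> 1"
  shows "(diameter P)\<^sup>2 + (diameter Q)\<^sup>2 \<le> 4"
proof -
  have A: "(diameter P)\<^sup>2 \<le> 4 - (dist u v)\<^sup>2" if u: "u \<in> Q" and v: "v \<in> Q" for u v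
  proof -
    have "diameter P \<le> sqrt (4 - (dist u v)\<^sup>2)"
    proof (rule diameter_le)
      show "P \<noteq> {} \<or> 0 \<le> sqrt (4 - (dist u v)\<^sup>2)" using Pne by simp
      fix x y assume x: "x \<in> P" and y: "y \<in> P"
      have "(dist x y)\<^sup>2 \<le> 4 - (dist u v)\<^sup>2"
        using quad[of x u v y] cr x y u v by simp
      thus "norm (x - y) \<le> sqrt (4 - (dist u v)\<^sup>2)"
        by (simp add: dist_norm real_le_rsqrt)
    qed
    moreover have "0 \<le> diameter P" using diameter_ge_0[OF bP] .
    moreover obtain x where "x \<in> P" using Pne by blast
    hence "(dist x x)\<^sup>2 + (dist u v)\<^sup>2 \<le> 4" using quad[of x u v x] cr u v by simp
    ultimately show ?thesis
      by (metis add_le_cancel_left diff_add_cancel dist_self power2_eq_square real_sqrt_le_iff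
          real_sqrt_pow2_iff  power_mono zero_power2 add_0 diff_ge_0_iff_ge)
  qed
  have "diameter Q \<le> sqrt (4 - (diameter P)\<^sup>2)"
  proof (rule diameter_le)
    show "Q \<noteq> {} \<or> 0 \<le> sqrt (4 - (diameter P)\<^sup>2)" using Qne by simp
    fix u v assume "u \<in> Q" "v \<in> Q"
    thus "norm (u - v) \<le> sqrt (4 - (diameter P)\<^sup>2)"
      using A by (intro real_le_rsqrt) (simp add: dist_norm algebra_simps)
  qed
  moreover have "0 \<le> diameter Q" using diameter_ge_0[OF bQ] .
  ultimately show ?thesis
    by (smt (verit) power_mono real_sqrt_ge_0_iff real_sqrt_pow2_iff)
qed

theorem theorem3p8:
  fixes K :: "'a::euclidean_space set"
  assumes "K \<in> S_class" and "K \<noteq> {}" and "K \<noteq> UNIV"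
  shows "2 \<le> diameter K + diameter (ball_dual K)
       \<and> diameter K + diameter (ball_dual K) \<le> 2 * sqrt 2
       \<and> 2 - diameter K \<le> diameter (ball_dual K)
       \<and> diameter (ball_dual K) \<le> sqrt (4 - (diameter K)\<^sup>2)"
proof -
  obtain A where KA: "K = ball_dual A" using assms(1) unfolding S_class_def by blast
  have Ane: "A \<noteq> {}" using assms(3) KA by (auto simp: ball_dual_def)
  define C where "C = ball_dual K"
  have KC: "K = ball_dual C" unfolding C_def KA by (simp add: bd3)
  have Cne: "C \<noteq> {}" using Ane bd_sub[of A] KA C_def by blast
  have bK: "bounded K" using Ane KA bd_bounded by blast
  have bC: "bounded C" using assms(2) C_def bd_bounded by blast
  have cr: "dist x u \<le> 1" if "x \<in> K" "u \<in> C" for x u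
    using that C_def by (simp add: mem_bd)
  have s2: "2 \<le> diameter K + diameter C"
  proof (cases "diameter K < 1")
    case True
    from key1[OF C_def assms(2) Cne bK bC True] show ?thesis by simp
  next
    case False
    show ?thesis
    proof (cases "diameter C < 1")
      case True
      from key1[OF KC Cne assms(2) bC bK True] show ?thesis by simp
    next
      case False
      with \<open>\<not> diameter K < 1\<close> show ?thesis by simp
    qed
  qed
  have sq: "(diameter K)\<^sup>2 + (diameter C)\<^sup>2 \<le> 4"
    using key2[OF assms(2) Cne bK bC] cr by blast
  have d0: "0 \<le> diameter K" "0 \<le> diameter C"
    using diameter_ge_0[OF bK] diameter_ge_0[OF bC] by auto
  have sum: "diameter K + diameter C \<le> 2 * sqrt 2"
  proof -
    have "(diameter K + diameter C)\<^sup>2 \<le> 8"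
      using sq sum_squares_bound[of "diameter K" "diameter C"]
      by (smt (verit) power2_sum)
    hence "diameter K + diameter C \<le> sqrt 8" using real_le_rsqrt by blast
    moreover have "sqrt 8 = 2 * sqrt 2"
      by (metis real_sqrt_mult real_sqrt_four mult.commute num_double numeral_times_numeral)
    ultimately show ?thesis by simp
  qed
  have "diameter C \<le> sqrt (4 - (diameter K)\<^sup>2)"
    using sq by (intro real_le_rsqrt) simp
  thus ?thesis using s2 sum C_def by auto
qed

end
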